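(* Assume $X_0\in L^\infty$ and $x\in\mathbb{R}$. Then $X^*$ is beating-performance-variance (BPV) efficient in $\mathscr{X}(x)$ if and only if $X^*$ is variance-minimal in $\mathscr{X}_{\mathrm{icx}}(x,X_0+z)$ for some $z\ge \frac{x}{\mathrm{E}[\rho]}-Q_0(1)$.
   Context: $(\Omega,\mathcal{F},\mathbb{P})$ is a complete nonatomic probability space. $\rho\in L^2$ with $\mathbb{P}(\rho>0)=1$ and $\mathrm{Var}[\rho]>0$. For a random variable $X$, $Q_X(t)=\inf\{y:\mathbb{P}(X\le y)>t\}$ for $t\in[0,1)$, $Q_X(1):=\lim_{t\uparrow1}Q_X(t)$; $Q_0:=Q_{X_0}$. For random variables $X,Y$, $X\succeq_{\mathrm{icx}}Y$ means $\mathrm{E}[f(X)]\ge\mathrm{E}[f(Y)]$ for all increasing convex $f$ (equivalently $\int_t^1Q_X\ge\int_t^1Q_Y$ for all $t\in[0,1]$). $\mathscr{X}(x)=\{X\in L^2:\mathrm{E}[\rho X]\le x\}$; $\mathscr{X}_{\mathrm{icx}}(x,Y_0)=\{X\in L^2:\mathrm{E}[\rho X]\le x,\ X\succeq_{\mathrm{icx}}Y_0\}$, and $X$ is variance-minimal in it if it minimizes $\mathrm{Var}[X]$ over it. The beating performance of $X\in L^2$ is $\psi(X)=\sup\{m\in\mathbb{R}: X-m\succeq_{\mathrm{icx}}X_0\}$ (with $\sup\emptyset=-\infty$). $X\in\mathscr{X}(x)$ is BPV efficient in $\mathscr{X}(x)$ if there is no $Y\in\mathscr{X}(x)$ with $\psi(Y)\ge\psi(X)$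 and $\mathrm{Var}[Y]\le\mathrm{Var}[X]$ with at least one inequality strict. *)

theory Defs
  imports "HOL-Probability.Probability"
begin

definition nonatomic :: "'a measure \<Rightarrow> bool" where
  "nonatomic M \<longleftrightarrow> (\<forall>A\<in>sets M. measure M A > 0 \<longrightarrow>
      (\<exists>B\<in>sets M. B \<subseteq> A \<and> 0 < measure M B \<and> measure M B < measure M A))"

definition L2 :: "'a measure \<Rightarrow> ('a \<Rightarrow> real) set" where
  "L2 M = {X. X \<in> borel_measurable M \<and> integrable M (\<lambda>\<omega>. (X \<omega>)\<^sup>2)}"

definition Linf :: "'a measure \<Rightarrow> ('a \<Rightarrow> real) set" where
  "Linf M = {X. X \<in> borel_measurable M \<and> (\<exists>C. AE \<omega> in M. \<bar>X \<omega>\<bar> \<le> C)}"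

definition expect :: "'a measure \<Rightarrow> ('a \<Rightarrow> real) \<Rightarrow> real" where
  "expect M X = (\<integral>\<omega>. X \<omega> \<partial>M)"

definition var :: "'a measure \<Rightarrow> ('a \<Rightarrow> real) \<Rightarrow> real" where
  "var M X = (\<integral>\<omega>. (X \<omega> - expect M X)\<^sup>2 \<partial>M)"

text \<open>Expectation in the extended sense, E[Z] = E[Z^+] - E[Z^-] in the extended reals
  (well defined whenever the negative part is integrable, which is the case for
  f(X) with f increasing convex and X in L2).\<close>
definition ext_expect :: "'a measure \<Rightarrow> ('a \<Rightarrow> real) \<Rightarrow> ereal" where
  "ext_expect M Z = enn2ereal (\<integral>\<^sup>+\<omega>. ennreal (max (Z \<omega>) 0) \<partial>M)
                   - enn2ereal (\<integral>\<^sup>+\<omega>. ennreal (max (- Z \<omega>) 0) \<partial>M)"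

definition icx_ge :: "'a measure \<Rightarrow> ('a \<Rightarrow> real) \<Rightarrow> ('a \<Rightarrow> real) \<Rightarrow> bool" where
  "icx_ge M X Y \<longleftrightarrow> (\<forall>f::real \<Rightarrow> real. mono f \<and> convex_on UNIV f \<longrightarrow>
      ext_expect M (\<lambda>\<omega>. f (Y \<omega>)) \<le> ext_expect M (\<lambda>\<omega>. f (X \<omega>)))"

definition quantile :: "'a measure \<Rightarrow> ('a \<Rightarrow> real) \<Rightarrow> real \<Rightarrow> real" where
  "quantile M X t = Inf {y. measure M {\<omega>\<in>space M. X \<omega> \<le> y} > t}"

definition quantile_one :: "'a measure \<Rightarrow> ('a \<Rightarrow> real) \<Rightarrow> real" where
  "quantile_one M X = Lim (at_left 1) (quantile M X)"

definition admissible :: "'a measure \<Rightarrow> ('a \<Rightarrow> real) \<Rightarrow> real \<Rightarrow> ('a \<Rightarrow> real) set" where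
  "admissible M \<rho> x = {X \<in> L2 M. expect M (\<lambda>\<omega>. \<rho> \<omega> * X \<omega>) \<le> x}"

definition admissible_icx ::
  "'a measure \<Rightarrow> ('a \<Rightarrow> real) \<Rightarrow> real \<Rightarrow> ('a \<Rightarrow> real) \<Rightarrow> ('a \<Rightarrow> real) set" where
  "admissible_icx M \<rho> x Y0 = {X \<in> L2 M. expect M (\<lambda>\<omega>. \<rho> \<omega> * X \<omega>) \<le> x \<and> icx_ge M X Y0}"

definition variance_minimal :: "'a measure \<Rightarrow> ('a \<Rightarrow> real) set \<Rightarrow> ('a \<Rightarrow> real) \<Rightarrow> bool" where
  "variance_minimal M S X \<longleftrightarrow> X \<in> S \<and> (\<forall>Y\<in>S. var M X \<le> var M Y)"

text \<open>Beating performance \<psi>(X) = sup{m : X - m \<succeq>icx X0}, with sup {} = -\<infinity>.\<close>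
definition beating_perf :: "'a measure \<Rightarrow> ('a \<Rightarrow> real) \<Rightarrow> ('a \<Rightarrow> real) \<Rightarrow> ereal" where
  "beating_perf M X0 X = Sup (ereal ` {m. icx_ge M (\<lambda>\<omega>. X \<omega> - m) X0})"

definition bpv_efficient ::
  "'a measure \<Rightarrow> ('a \<Rightarrow> real) \<Rightarrow> ('a \<Rightarrow> real) \<Rightarrow> real \<Rightarrow> ('a \<Rightarrow> real) \<Rightarrow> bool" where
  "bpv_efficient M \<rho> X0 x X \<longleftrightarrow> X \<in> admissible M \<rho> x \<and>
     \<not> (\<exists>Y\<in>admissible M \<rho> x. beating_perf M X0 Y \<ge> beating_perf M X0 X \<and> var M Y \<le> var M X \<and>
          (beating_perf M X0 Y > beating_perf M X0 X \<or> var M Y < var M X))"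

end

theory Submission
  imports Defs
begin


definition mc :: "(real \<Rightarrow> real) \<Rightarrow> bool" where
  "mc f \<longleftrightarrow> mono f \<and> convex_on UNIV f"

lemma mc_affine:
  assumes "mc f" "t > 0"
  shows "mc (\<lambda>u. f (t * u + k))"
  unfolding mc_def
proof
  show "mono (\<lambda>u. f (t * u + k))"
    using assms unfolding mc_def mono_def by (auto intro!: mult_left_mono)
  show "convex_on UNIV (\<lambda>u. f (t * u + k))"
    unfolding convex_on_def
  proof (intro conjI ballI allI impI)
    fix x y u v :: real assume uv: "u \<ge> 0" "v \<ge> 0" "u + v = 1"
    have c: "convex_on UNIV f" using assms unfolding mc_def by simp
    have "t * (u *\<^sub>R x + v *\<^sub>R y) + k = u *\<^sub>R (t*x+k) + v *\<^sub>R (t*y+k)"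
      using uv by (simp add: algebra_simps) (metis distrib_left mult.right_neutral)
    moreover have "f (u *\<^sub>R (t*x+k) + v *\<^sub>R (t*y+k)) \<le> u * f (t*x+k) + v * f (t*y+k)"
      using c uv unfolding convex_on_def by blast
    ultimately show "f (t * (u *\<^sub>R x + v *\<^sub>R y) + k) \<le> u * f (t * x + k) + v * f (t * y + k)"
      by simp
  qed simp
qed

lemma mc_shift: "mc f \<Longrightarrow> mc (\<lambda>u. f (u + k))"
  using mc_affine[of f 1 k] by simp

lemma mc_cont: "mc f \<Longrightarrow> continuous_on UNIV f"
  unfolding mc_def by (auto intro: convex_on_continuous)

lemma mc_meas: "mc f \<Longrightarrow> X \<in> borel_measurable M \<Longrightarrow> (\<lambda>w. f (X w)) \<in> borel_measurable M"
  using borel_measurable_continuous_onI[OF mc_cont] measurable_compose by blast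

lemma convex_slope3:
  assumes c: "convex_on UNIV f" and "a < b" "b < (cc::real)"
  shows "(f b - f a) * (cc - b) \<le> (f cc - f b) * (b - a)"
proof -
  define l where "l = (cc - b) / (cc - a)"
  have l0: "0 \<le> l" "0 \<le> 1 - l" using assms by (auto simp: l_def divide_simps)
  have lc: "l * (cc - a) = cc - b" using assms by (simp add: l_def)
  have "b = l *\<^sub>R a + (1 - l) *\<^sub>R cc" using lc by (simp add: algebra_simps)
  then have "f b \<le> l * f a + (1 - l) * f cc"
  proof -
    have "f (l *\<^sub>R a + (1 - l) *\<^sub>R cc) \<le> l * f a + (1 - l) * f cc"
      using c l0 unfolding convex_on_def by simp
    then show ?thesis using \<open>b = _\<close> by simp
  qed
  then have "(cc - a) * f b \<le> (cc - a) * (l * f a + (1 - l) * f cc)"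
    using assms by (simp add: mult_left_mono)
  also have "\<dots> = (l*(cc-a)) * f a + ((cc - a) - l*(cc-a)) * f cc"
    by (simp add: algebra_simps)
  also have "\<dots> = (cc - b) * f a + (b - a) * f cc"
    using lc by simp
  finally show ?thesis by (simp add: algebra_simps)
qed

lemma mc_slope:
  assumes "mc f" "u \<le> B" "0 < d"
  shows "f u \<le> f (u - d) + d * (f (B+1) - f B)"
proof -
  have c: "convex_on UNIV f" using assms unfolding mc_def by simp
  have 1: "(f u - f (u-d)) * (B + 1 - u) \<le> (f (B+1) - f u) * d"
    using convex_slope3[OF c, of "u-d" u "B+1"] assms by simp
  have 2: "(f (B+1) - f u) \<le> (f (B+1) - f B) * (B + 1 - u)"
  proof (cases "u < B")
    case True
    have "(f B - f u) * (B + 1 - B) \<le> (f (B+1) - f B) * (B - u)"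
      using convex_slope3[OF c, of u B "B+1"] True by simp
    then show ?thesis by (simp add: algebra_simps)
  next
    case False then show ?thesis using assms by simp
  qed
  have "(f u - f (u-d)) * (B + 1 - u) \<le> (f (B+1) - f B) * d * (B + 1 - u)"
    using 1 mult_right_mono[OF 2, of d] assms by (simp add: algebra_simps)
  then have "f u - f (u-d) \<le> (f (B+1) - f B) * d"
    using assms by (simp add: mult_le_cancel_right)
  then show ?thesis by (simp add: algebra_simps)
qed



lemma ext_expect_integrable:
  assumes "integrable M Z"
  shows "ext_expect M Z = ereal (integral\<^sup>L M Z)"
proof -
  have i1: "integrable M (\<lambda>w. max (Z w) 0)" using assms by auto
  have i2: "integrable M (\<lambda>w. max (- Z w) 0)" using assms by auto
  have "(\<integral>\<^sup>+w. ennreal (max (Z w) 0) \<partial>M) = ennreal (integral\<^sup>L M (\<lambda>w. max (Z w) 0))"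
    using i1 by (intro nn_integral_eq_integral) auto
  moreover have "(\<integral>\<^sup>+w. ennreal (max (- Z w) 0) \<partial>M) = ennreal (integral\<^sup>L M (\<lambda>w. max (- Z w) 0))"
    using i2 by (intro nn_integral_eq_integral) auto
  moreover have "integral\<^sup>L M Z = integral\<^sup>L M (\<lambda>w. max (Z w) 0) - integral\<^sup>L M (\<lambda>w. max (- Z w) 0)"
  proof -
    have "integral\<^sup>L M Z = integral\<^sup>L M (\<lambda>w. max (Z w) 0 - max (- Z w) 0)"
      by (intro Bochner_Integration.integral_cong) auto
    also have "\<dots> = integral\<^sup>L M (\<lambda>w. max (Z w) 0) - integral\<^sup>L M (\<lambda>w. max (- Z w) 0)"
      using i1 i2 by simp
    finally show ?thesis .
  qed
  moreover have "integral\<^sup>L M (\<lambda>w. max (Z w) 0) \<ge> 0" "integral\<^sup>L M (\<lambda>w. max (- Z w) 0) \<ge> 0"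
    by auto
  ultimately show ?thesis unfolding ext_expect_def by simp
qed

lemma ext_expect_mono_AE:
  assumes "AE w in M. Z1 w \<le> Z2 w"
  shows "ext_expect M Z1 \<le> ext_expect M Z2"
proof -
  have "(\<integral>\<^sup>+w. ennreal (max (Z1 w) 0) \<partial>M) \<le> (\<integral>\<^sup>+w. ennreal (max (Z2 w) 0) \<partial>M)"
    using assms by (intro nn_integral_mono_AE) (auto elim!: eventually_mono intro: ennreal_leI)
  moreover have "(\<integral>\<^sup>+w. ennreal (max (- Z2 w) 0) \<partial>M) \<le> (\<integral>\<^sup>+w. ennreal (max (- Z1 w) 0) \<partial>M)"
    using assms by (intro nn_integral_mono_AE) (auto elim!: eventually_mono intro: ennreal_leI)
  ultimately show ?thesis unfolding ext_expect_def
    by (intro ereal_minus_mono) (auto simp: less_eq_ennreal.rep_eq)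
qed

lemma Linf_bound:
  assumes "X0 \<in> Linf M"
  obtains B where "B \<ge> 0" "AE w in M. \<bar>X0 w\<bar> \<le> B"
proof -
  obtain C where "AE w in M. \<bar>X0 w\<bar> \<le> C" using assms unfolding Linf_def by auto
  then have "AE w in M. \<bar>X0 w\<bar> \<le> max C 0" by (auto elim!: eventually_mono)
  then show ?thesis using that[of "max C 0"] by auto
qed

lemma Linf_integrable:
  assumes "prob_space M" "X0 \<in> Linf M" "mc f"
  shows "integrable M (\<lambda>w. f (X0 w))"
proof -
  interpret prob_space M by fact
  obtain B where B: "AE w in M. \<bar>X0 w\<bar> \<le> B" using Linf_bound[OF assms(2)] by blast
  have m: "mono f" using assms(3) unfolding mc_def by simp
  have "AE w in M. norm (f (X0 w)) \<le> \<bar>f (-B)\<bar> + \<bar>f B\<bar>"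
    using B
  proof (rule eventually_mono)
    fix w assume "\<bar>X0 w\<bar> \<le> B"
    then have "f (-B) \<le> f (X0 w)" "f (X0 w) \<le> f B" using m by (auto intro: monoD)
    then show "norm (f (X0 w)) \<le> \<bar>f (-B)\<bar> + \<bar>f B\<bar>" by auto
  qed
  moreover have "(\<lambda>w. f (X0 w)) \<in> borel_measurable M"
    using assms(2,3) mc_meas unfolding Linf_def by blast
  ultimately show ?thesis by (intro integrable_const_bound)
qed

lemma icx_shift:
  "icx_ge M X (\<lambda>w. Y w + z) \<longleftrightarrow> icx_ge M (\<lambda>w. X w - z) Y"
proof
  assume H: "icx_ge M X (\<lambda>w. Y w + z)"
  show "icx_ge M (\<lambda>w. X w - z) Y"
    unfolding icx_ge_def
  proof (intro allI impI)
    fix f :: "real \<Rightarrow> real" assume "mono f \<and> convex_on UNIV f"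
    then have "mc (\<lambda>u. f (u + (-z)))" by (intro mc_shift) (simp add: mc_def)
    then have "ext_expect M (\<lambda>w. f (Y w + z + (-z))) \<le> ext_expect M (\<lambda>w. f (X w + (-z)))"
      using H unfolding icx_ge_def mc_def by blast
    then show "ext_expect M (\<lambda>w. f (Y w)) \<le> ext_expect M (\<lambda>w. f (X w - z))" by simp
  qed
next
  assume H: "icx_ge M (\<lambda>w. X w - z) Y"
  show "icx_ge M X (\<lambda>w. Y w + z)"
    unfolding icx_ge_def
  proof (intro allI impI)
    fix f :: "real \<Rightarrow> real" assume "mono f \<and> convex_on UNIV f"
    then have "mc (\<lambda>u. f (u + z))" by (intro mc_shift) (simp add: mc_def)
    then have "ext_expect M (\<lambda>w. f (Y w + z)) \<le> ext_expect M (\<lambda>w. f (X w - z + z))"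
      using H unfolding icx_ge_def mc_def by blast
    then show "ext_expect M (\<lambda>w. f (Y w + z)) \<le> ext_expect M (\<lambda>w. f (X w))" by simp
  qed
qed

lemma attain:
  assumes "prob_space M" "X0 \<in> Linf M" "ereal s \<le> beating_perf M X0 X"
  shows "icx_ge M (\<lambda>w. X w - s) X0"
  unfolding icx_ge_def
proof (intro allI impI)
  fix f :: "real \<Rightarrow> real" assume "mono f \<and> convex_on UNIV f"
  then have f: "mc f" by (simp add: mc_def)
  obtain B where B: "AE w in M. \<bar>X0 w\<bar> \<le> B" using Linf_bound[OF assms(2)] by blast
  define L where "L = f (B+1) - f B"
  have L0: "L \<ge> 0" using f unfolding mc_def L_def by (auto intro: monoD)
  have int0: "integrable M (\<lambda>w. f (X0 w))" using Linf_integrable[OF assms(1,2) f] .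
  show "ext_expect M (\<lambda>w. f (X0 w)) \<le> ext_expect M (\<lambda>w. f (X w - s))"
  proof (rule ereal_le_epsilon2)
    fix e :: real assume e: "0 < e"
    define d0 where "d0 = e / (L + 1)"
    have d0: "d0 > 0" "d0 * L \<le> e" using e L0 by (auto simp: d0_def field_simps)
    have "ereal (s - d0) < beating_perf M X0 X" 
    proof -
      have "ereal (s - d0) < ereal s" using d0 by simp
      then show ?thesis using assms(3) by (rule less_le_trans)
    qed
    then obtain m where m: "icx_ge M (\<lambda>w. X w - m) X0" "s - d0 < m"
      unfolding beating_perf_def less_Sup_iff by auto
    define d where "d = s - m"
    have dd: "d < d0" using m d_def by simp
    have g: "mc (\<lambda>u. f (u + (- d)))" using mc_shift[OF f] .
    have int1: "integrable M (\<lambda>w. f (X0 w + (- d)))" using Linf_integrable[OF assms(1,2) g] .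
    have 1: "ext_expect M (\<lambda>w. f (X0 w + (-d))) \<le> ext_expect M (\<lambda>w. f (X w - m + (-d)))"
      using m(1) g unfolding icx_ge_def mc_def by blast
    have 2: "(\<lambda>w. f (X w - m + (-d))) = (\<lambda>w. f (X w - s))" by (simp add: d_def)
    have 3: "AE w in M. f (X0 w) \<le> f (X0 w + (-d)) + e"
      using B
    proof (rule eventually_mono)
      fix w assume w: "\<bar>X0 w\<bar> \<le> B"
      show "f (X0 w) \<le> f (X0 w + (-d)) + e"
      proof (cases "d \<le> 0")
        case True
        then have "f (X0 w) \<le> f (X0 w + (-d))" using f unfolding mc_def by (auto intro: monoD)
        then show ?thesis using e by simp
      next
        case False
        have "f (X0 w) \<le> f (X0 w - d) + d * L" using mc_slope[OF f, of "X0 w" B d] w False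
          by (simp add: L_def)
        moreover have "d * L \<le> e" using d0 dd L0 False
          by (meson less_eq_real_def mult_right_mono order_trans)
        ultimately show ?thesis by simp
      qed
    qed
    have "ext_expect M (\<lambda>w. f (X0 w)) = ereal (integral\<^sup>L M (\<lambda>w. f (X0 w)))"
      using ext_expect_integrable[OF int0] .
    also have "\<dots> \<le> ereal (integral\<^sup>L M (\<lambda>w. f (X0 w + (-d))) + e)"
    proof -
      interpret prob_space M by fact
      have "integral\<^sup>L M (\<lambda>w. f (X0 w)) \<le> integral\<^sup>L M (\<lambda>w. f (X0 w + (-d)) + e)"
        using 3 int0 int1 by (intro integral_mono_AE) auto
      also have "\<dots> = integral\<^sup>L M (\<lambda>w. f (X0 w + (-d))) + e"
        using int1 by (simp add: prob_space)
      finally show ?thesis by simp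
    qed
    also have "\<dots> = ext_expect M (\<lambda>w. f (X0 w + (-d))) + ereal e"
      using ext_expect_integrable[OF int1] by simp
    also have "\<dots> \<le> ext_expect M (\<lambda>w. f (X w - s)) + ereal e"
      using 1 2 by (metis add_right_mono)
    finally show "ext_expect M (\<lambda>w. f (X0 w)) \<le> ext_expect M (\<lambda>w. f (X w - s)) + ereal e" .
  qed
qed



context
  fixes M :: "'a measure" and X0 :: "'a \<Rightarrow> real" and B :: real
  assumes P: "prob_space M" and X0m: "X0 \<in> borel_measurable M"
    and Bd: "AE w in M. \<bar>X0 w\<bar> \<le> B"
begin

private definition Fm :: "real \<Rightarrow> real" where "Fm y = measure M {w \<in> space M. X0 w \<le> y}"
private definition St :: "real \<Rightarrow> real set" where "St t = {y. Fm y > t}"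

private lemma St_iff[simp]: "y \<in> St t \<longleftrightarrow> Fm y > t" by (simp add: St_def)
private lemma Q_eq: "quantile M X0 t = Inf (St t)" by (simp add: quantile_def St_def Fm_def)

private lemma sets_le: "{w \<in> space M. X0 w \<le> y} \<in> sets M"
  using X0m by measurable

private lemma F_AE: "AE w in M. X0 w \<le> a \<Longrightarrow> Fm a = 1"
  using prob_space.prob_Collect_eq_1[OF P sets_le] by (simp add: Fm_def)

private lemma B_in: "t < 1 \<Longrightarrow> B \<in> St t"
proof -
  have "AE w in M. X0 w \<le> B" using Bd by (rule eventually_mono) auto
  then have "Fm B = 1" by (rule F_AE)
  then show "t < 1 \<Longrightarrow> B \<in> St t" by simp
qed

private lemma St_lb: assumes "t \<ge> 0" "y \<in> St t" shows "- B \<le> y"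
proof (rule ccontr)
  assume "\<not> - B \<le> y"
  then have "AE w in M. \<not> X0 w \<le> y" using Bd by (rule_tac eventually_mono) auto
  then have "Fm y = 0" unfolding Fm_def by (rule prob_space.prob_eq_0_AE[OF P])
  then show False using assms by simp
qed

private lemma bddb: "t \<ge> 0 \<Longrightarrow> bdd_below (St t)"
  by (rule bdd_below.I[of _ "- B"]) (rule St_lb)

private lemma Q_le_B: "0 \<le> t \<Longrightarrow> t < 1 \<Longrightarrow> quantile M X0 t \<le> B"
  unfolding Q_eq by (rule cInf_lower[OF B_in bddb])

private lemma Q_mono: "0 \<le> t \<Longrightarrow> t \<le> t' \<Longrightarrow> t' < 1 \<Longrightarrow> quantile M X0 t \<le> quantile M X0 t'"
proof -
  assume a: "0 \<le> t" "t \<le> t'" "t' < 1"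
  have "St t' \<subseteq> St t" using a(2) by auto
  moreover have "St t' \<noteq> {}" using B_in[OF a(3)] by auto
  ultimately show ?thesis unfolding Q_eq using bddb[OF a(1)]
    by (intro cInf_superset_mono) auto
qed

private definition "SS = Sup (quantile M X0 ` {0<..<1})"

private lemma bdda: "bdd_above (quantile M X0 ` {0<..<1})"
  using Q_le_B by (intro bdd_aboveI[of _ B]) auto

private lemma Q_le_SS: "0 < t \<Longrightarrow> t < 1 \<Longrightarrow> quantile M X0 t \<le> SS"
  unfolding SS_def using bdda by (intro cSup_upper) auto

private lemma tends: "(quantile M X0 \<longlongrightarrow> SS) (at_left 1)"
proof (rule order_tendstoI)
  fix a assume "a < SS"
  then obtain t0 where t0: "t0 \<in> {0<..<1}" "a < quantile M X0 t0"
    unfolding SS_def using bdda by (subst (asm) less_cSup_iff) auto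
  have "\<forall>\<^sub>F t in at_left 1. t \<in> {t0<..<1}" using t0 by (intro eventually_at_left_real) auto
  then show "\<forall>\<^sub>F t in at_left 1. a < quantile M X0 t"
  proof (rule eventually_mono)
    fix t assume "t \<in> {t0<..<(1::real)}"
    then show "a < quantile M X0 t" using Q_mono[of t0 t] t0 by auto
  qed
next
  fix a assume "SS < a"
  have "\<forall>\<^sub>F t in at_left 1. t \<in> {0<..<(1::real)}" by (intro eventually_at_left_real) auto
  then show "\<forall>\<^sub>F t in at_left 1. quantile M X0 t < a"
  proof (rule eventually_mono)
    fix t assume "t \<in> {0<..<(1::real)}"
    then show "quantile M X0 t < a" using Q_le_SS[of t] \<open>SS < a\<close> by simp
  qed
qed

private lemma q1_eq: "quantile_one M X0 = SS"
  unfolding quantile_one_def by (rule tendsto_Lim[OF trivial_limit_at_left_real tends])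

lemma X0_le_q1: "AE w in M. X0 w \<le> quantile_one M X0"
proof -
  have e: "AE w in M. X0 w \<le> SS + e" if e: "e > 0" for e
  proof -
    have "Fm (SS + e) \<ge> t" if t: "0 < t" "t < 1" for t
    proof -
      have ne: "St t \<noteq> {}" using B_in[of t] t by blast
      have "Inf (St t) < SS + e" using Q_le_SS[OF t] e unfolding Q_eq by simp
      then obtain y where y: "y \<in> St t" "y < SS + e" using cInf_lessD[OF ne] by blast
      have "Fm y \<le> Fm (SS + e)"
        using y(2) sets_le unfolding Fm_def by (intro finite_measure.finite_measure_mono prob_space.finite_measure[OF P]) auto
      then show ?thesis using y(1) by simp
    qed
    then have "Fm (SS + e) \<ge> 1"
    proof -
      assume H: "\<And>t. 0 < t \<Longrightarrow> t < 1 \<Longrightarrow> t \<le> Fm (SS + e)"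
      show ?thesis
      proof (rule ccontr)
        assume "\<not> 1 \<le> Fm (SS + e)"
        moreover have "Fm (SS + e) \<ge> 0" unfolding Fm_def by simp
        ultimately have "(Fm (SS + e) + 1) / 2 \<le> Fm (SS + e)" using H[of "(Fm (SS + e) + 1) / 2"] by simp
        then show False using \<open>\<not> 1 \<le> Fm (SS + e)\<close> by simp
      qed
    qed
    then have "Fm (SS + e) = 1" using prob_space.measure_ge_1_iff[OF P] unfolding Fm_def by blast
    then show ?thesis using prob_space.prob_Collect_eq_1[OF P sets_le] by (simp add: Fm_def)
  qed
  have "AE w in M. \<forall>n::nat. X0 w \<le> SS + 1 / Suc n"
    unfolding AE_all_countable using e by simp
  then have "AE w in M. X0 w \<le> SS"
  proof (rule eventually_mono)
    fix w assume H: "\<forall>n::nat. X0 w \<le> SS + 1 / Suc n"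
    show "X0 w \<le> SS"
    proof (rule ccontr)
      assume "\<not> X0 w \<le> SS"
      then obtain n :: nat where "1 / Suc n < X0 w - SS"
        using nat_approx_posE by (metis diff_gt_0_iff_gt not_le)
      then show False using H[rule_format, of n] by simp
    qed
  qed
  then show ?thesis unfolding q1_eq .
qed

lemma q1_le: assumes "AE w in M. X0 w \<le> a" shows "quantile_one M X0 \<le> a"
proof -
  have "quantile M X0 t \<le> a" if t: "t \<in> {0<..<1}" for t
  proof -
    have "a \<in> St t" using F_AE[OF assms] t by auto
    then show ?thesis unfolding Q_eq using bddb[of t] t by (intro cInf_lower) auto
  qed
  then have "SS \<le> a" unfolding SS_def by (intro cSup_least) auto
  then show ?thesis unfolding q1_eq .
qed

end



lemma mc_id: "mc (\<lambda>u. u)"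
  unfolding mc_def by (simp add: mono_def convex_on_ident)

lemma mc_hinge: "mc (\<lambda>u. max (u - a) 0)"
  unfolding mc_def
proof
  show "mono (\<lambda>u::real. max (u - a) 0)" by (auto simp: mono_def)
  show "convex_on UNIV (\<lambda>u::real. max (u - a) 0)"
    unfolding convex_on_def
  proof (intro conjI ballI allI impI)
    fix x y u v :: real assume uv: "u \<ge> 0" "v \<ge> 0" "u + v = 1"
    have r0: "0 \<le> u * max (x - a) 0 + v * max (y - a) 0" using uv by simp
    have "u * (x - a) \<le> u * max (x - a) 0" using uv by (intro mult_left_mono) auto
    moreover have "v * (y - a) \<le> v * max (y - a) 0" using uv by (intro mult_left_mono) auto
    moreover have "u *\<^sub>R x + v *\<^sub>R y - a = u * (x - a) + v * (y - a)"
      using uv by (simp add: algebra_simps) (metis add_diff_cancel_left' distrib_left mult.right_neutral)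
    ultimately show "max (u *\<^sub>R x + v *\<^sub>R y - a) 0 \<le> u * max (x - a) 0 + v * max (y - a) 0"
      using r0 by simp
  qed simp
qed

context
  fixes M :: "'a measure"
  assumes P: "prob_space M"
begin

lemma L2_integrable: "X \<in> L2 M \<Longrightarrow> integrable M X"
  unfolding L2_def using finite_measure.square_integrable_imp_integrable[OF prob_space.finite_measure[OF P]]
  by blast

lemma L2_affine:
  assumes "X \<in> L2 M" shows "(\<lambda>w. t * X w + k) \<in> L2 M"
proof -
  have m: "X \<in> borel_measurable M" and i: "integrable M (\<lambda>w. (X w)\<^sup>2)" using assms unfolding L2_def by auto
  have ik: "integrable M (\<lambda>w. 2 * t\<^sup>2 * (X w)\<^sup>2 + 2 * k\<^sup>2)"
  proof -
    interpret prob_space M by (rule P)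
    show ?thesis using i by (intro Bochner_Integration.integrable_add) auto
  qed
  have "integrable M (\<lambda>w. (t * X w + k)\<^sup>2)"
  proof (rule Bochner_Integration.integrable_bound[OF ik])
    show "(\<lambda>w. (t * X w + k)\<^sup>2) \<in> borel_measurable M" using m by measurable
    show "AE w in M. norm ((t * X w + k)\<^sup>2) \<le> norm (2 * t\<^sup>2 * (X w)\<^sup>2 + 2 * k\<^sup>2)"
    proof (rule AE_I2)
      fix w
      have "(t * X w + k)\<^sup>2 \<le> 2 * t\<^sup>2 * (X w)\<^sup>2 + 2 * k\<^sup>2"
        using sum_squares_ge_zero[of "t * X w - k" 0] by (simp add: power2_eq_square algebra_simps)
      then show "norm ((t * X w + k)\<^sup>2) \<le> norm (2 * t\<^sup>2 * (X w)\<^sup>2 + 2 * k\<^sup>2)" by simp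
    qed
  qed
  then show ?thesis using m unfolding L2_def by auto
qed

lemma L2_const: "(\<lambda>w. c) \<in> L2 M"
proof -
  interpret prob_space M by (rule P)
  show ?thesis unfolding L2_def by auto
qed

lemma L2_prod:
  assumes "X \<in> L2 M" "Y \<in> L2 M" shows "integrable M (\<lambda>w. X w * Y w)"
proof -
  have m: "X \<in> borel_measurable M" "Y \<in> borel_measurable M"
    and i: "integrable M (\<lambda>w. (X w)\<^sup>2)" "integrable M (\<lambda>w. (Y w)\<^sup>2)" using assms unfolding L2_def by auto
  have ik: "integrable M (\<lambda>w. (X w)\<^sup>2 + (Y w)\<^sup>2)" using i by auto
  show ?thesis
  proof (rule Bochner_Integration.integrable_bound[OF ik])
    show "(\<lambda>w. X w * Y w) \<in> borel_measurable M" using m by measurable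
    show "AE w in M. norm (X w * Y w) \<le> norm ((X w)\<^sup>2 + (Y w)\<^sup>2)"
    proof (rule AE_I2)
      fix w
      have "0 \<le> (\<bar>X w\<bar> - \<bar>Y w\<bar>)\<^sup>2" by simp
      also have "\<dots> = (X w)\<^sup>2 + (Y w)\<^sup>2 - 2 * \<bar>X w * Y w\<bar>"
        by (simp add: power2_eq_square algebra_simps abs_mult)
      finally have "\<bar>X w * Y w\<bar> \<le> (X w)\<^sup>2 + (Y w)\<^sup>2"
        using zero_le_power2[of "X w"] zero_le_power2[of "Y w"] by linarith
      then show "norm (X w * Y w) \<le> norm ((X w)\<^sup>2 + (Y w)\<^sup>2)" by simp
    qed
  qed
qed

lemma var_nonneg: "var M X \<ge> 0"
  unfolding var_def by simp

lemma var_affine: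
  assumes "X \<in> L2 M" shows "var M (\<lambda>w. t * X w + k) = t\<^sup>2 * var M X"
proof -
  interpret prob_space M by (rule P)
  have iX: "integrable M X" using L2_integrable[OF assms] .
  have e: "expect M (\<lambda>w. t * X w + k) = t * expect M X + k"
    unfolding expect_def using iX by (simp add: prob_space)
  have "var M (\<lambda>w. t * X w + k) = (\<integral>w. t\<^sup>2 * (X w - expect M X)\<^sup>2 \<partial>M)"
    unfolding var_def e by (intro Bochner_Integration.integral_cong) (auto simp: power2_eq_square algebra_simps)
  also have "\<dots> = t\<^sup>2 * var M X" unfolding var_def by simp
  finally show ?thesis .
qed

lemma var_zero:
  assumes "X \<in> L2 M" "var M X = 0" shows "AE w in M. X w = expect M X"
proof -
  have i: "integrable M (\<lambda>w. (X w - expect M X)\<^sup>2)"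
    using L2_affine[OF assms(1), of 1 "- expect M X"] unfolding L2_def by simp
  have "AE w in M. (X w - expect M X)\<^sup>2 = 0"
    using assms(2) integral_nonneg_eq_0_iff_AE[OF i] unfolding var_def by simp
  then show ?thesis by (rule eventually_mono) simp
qed

lemma expect_pos:
  assumes "\<rho> \<in> L2 M" "AE w in M. \<rho> w > 0" shows "expect M \<rho> > 0"
proof -
  have i: "integrable M \<rho>" using L2_integrable[OF assms(1)] .
  have nn: "AE w in M. 0 \<le> \<rho> w" using assms(2) by (rule eventually_mono) simp
  have ge: "expect M \<rho> \<ge> 0" unfolding expect_def using nn by (rule integral_nonneg_AE)
  have "expect M \<rho> \<noteq> 0"
  proof
    assume "expect M \<rho> = 0"
    then have "AE w in M. \<rho> w = 0" using integral_nonneg_eq_0_iff_AE[OF i nn] unfolding expect_def by simp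
    with assms(2) have "AE w in M. False" by (rule eventually_elim2) simp
    then show False using prob_space.AE_False[OF P] by simp
  qed
  then show ?thesis using ge by simp
qed

lemma psi_finite:
  assumes "X \<in> L2 M" "X0 \<in> Linf M"
  shows "beating_perf M X0 X < \<infinity>"
proof -
  interpret prob_space M by (rule P)
  have iX: "integrable M X" using L2_integrable[OF assms(1)] .
  have i0: "integrable M X0" using Linf_integrable[OF P assms(2) mc_id] by simp
  have "m \<le> expect M X - expect M X0" if "icx_ge M (\<lambda>w. X w - m) X0" for m
  proof -
    have "ext_expect M (\<lambda>w. X0 w) \<le> ext_expect M (\<lambda>w. X w - m)"
      using that mc_id unfolding icx_ge_def mc_def by blast
    moreover have "ext_expect M (\<lambda>w. X0 w) = ereal (expect M X0)"
      using ext_expect_integrable[OF i0] unfolding expect_def by simp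
    moreover have "ext_expect M (\<lambda>w. X w - m) = ereal (expect M X - m)"
      using ext_expect_integrable[of M "\<lambda>w. X w - m"] iX unfolding expect_def by (simp add: prob_space)
    ultimately show ?thesis by simp
  qed
  then have "beating_perf M X0 X \<le> ereal (expect M X - expect M X0)"
    unfolding beating_perf_def by (intro Sup_least) (auto simp only: ereal_less_eq image_iff mem_Collect_eq)
  moreover have "ereal (expect M X - expect M X0) < \<infinity>" by simp
  ultimately show ?thesis by (rule le_less_trans)
qed

end



context
  fixes M :: "'a measure" and \<rho> X0 :: "'a \<Rightarrow> real" and x :: real
  assumes P: "prob_space M" and rL2: "\<rho> \<in> L2 M" and rpos: "AE w in M. \<rho> w > 0"
    and X0L: "X0 \<in> Linf M"
begin

lemma X0m: "X0 \<in> borel_measurable M" using X0L unfolding Linf_def by simp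

lemma AE_X0_q: "AE w in M. X0 w \<le> quantile_one M X0"
proof -
  obtain B where "B \<ge> 0" "AE w in M. \<bar>X0 w\<bar> \<le> B" using Linf_bound[OF X0L] by blast
  then show ?thesis using X0_le_q1[OF P X0m] by blast
qed

lemma q_le: "AE w in M. X0 w \<le> a \<Longrightarrow> quantile_one M X0 \<le> a"
proof -
  obtain B where "B \<ge> 0" "AE w in M. \<bar>X0 w\<bar> \<le> B" using Linf_bound[OF X0L] by blast
  then show "AE w in M. X0 w \<le> a \<Longrightarrow> quantile_one M X0 \<le> a" using q1_le[OF P X0m] by blast
qed

lemma Epos: "expect M \<rho> > 0" using expect_pos[OF P rL2 rpos] .

lemma rint: "integrable M \<rho>" using L2_integrable[OF P rL2] .

lemma rm: "\<rho> \<in> borel_measurable M" using rL2 unfolding L2_def by simp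

lemma key:
  assumes Y: "Y \<in> admissible M \<rho> x" and v: "var M Y = 0" and icx: "icx_ge M (\<lambda>w. Y w - m) X0"
  shows "m \<le> x / expect M \<rho> - quantile_one M X0"
proof -
  interpret prob_space M by (rule P)
  have YL: "Y \<in> L2 M" and bud: "expect M (\<lambda>w. \<rho> w * Y w) \<le> x" using Y unfolding admissible_def by auto
  have Ym: "Y \<in> borel_measurable M" using YL unfolding L2_def by simp
  define k where "k = expect M Y"
  have AEk: "AE w in M. Y w = k" using var_zero[OF P YL v] unfolding k_def .
  have "expect M (\<lambda>w. \<rho> w * Y w) = expect M (\<lambda>w. \<rho> w * k)"
    unfolding expect_def
  proof (rule integral_cong_AE)
    show "(\<lambda>w. \<rho> w * Y w) \<in> borel_measurable M" using rm Ym by measurable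
    show "(\<lambda>w. \<rho> w * k) \<in> borel_measurable M" using rm by measurable
    show "AE w in M. \<rho> w * Y w = \<rho> w * k" using AEk by (rule eventually_mono) simp
  qed
  also have "\<dots> = k * expect M \<rho>" unfolding expect_def by simp
  finally have "k * expect M \<rho> \<le> x" using bud by simp
  then have kc: "k \<le> x / expect M \<rho>" using Epos by (simp add: pos_le_divide_eq)
  define a where "a = k - m"
  have h: "mc (\<lambda>u. max (u - a) 0)" by (rule mc_hinge)
  have "ext_expect M (\<lambda>w. max (X0 w - a) 0) \<le> ext_expect M (\<lambda>w. max (Y w - m - a) 0)"
    using icx h unfolding icx_ge_def mc_def by blast
  also have "\<dots> \<le> ext_expect M (\<lambda>w. 0)"
    by (rule ext_expect_mono_AE) (use AEk in \<open>rule eventually_mono, simp add: a_def\<close>)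
  also have "\<dots> = 0" using ext_expect_integrable[of M "\<lambda>w. 0"] by simp
  finally have le0: "ext_expect M (\<lambda>w. max (X0 w - a) 0) \<le> 0" .
  have ih: "integrable M (\<lambda>w. max (X0 w - a) 0)" using Linf_integrable[OF P X0L h] .
  have "integral\<^sup>L M (\<lambda>w. max (X0 w - a) 0) \<le> 0" using le0 ext_expect_integrable[OF ih] by simp
  moreover have "integral\<^sup>L M (\<lambda>w. max (X0 w - a) 0) \<ge> 0" by simp
  ultimately have "integral\<^sup>L M (\<lambda>w. max (X0 w - a) 0) = 0" by simp
  then have "AE w in M. max (X0 w - a) 0 = 0" using integral_nonneg_eq_0_iff_AE[OF ih] by simp
  then have "AE w in M. X0 w \<le> a" by (rule eventually_mono) simp
  then have "quantile_one M X0 \<le> a" by (rule q_le)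
  then show ?thesis using kc unfolding a_def by simp
qed

lemma mix:
  fixes z m t :: real
  defines "c \<equiv> x / expect M \<rho>"
  assumes Y: "Y \<in> admissible M \<rho> x" and icx: "icx_ge M (\<lambda>w. Y w - m) X0"
    and t: "0 < t" "t < 1" and zt: "z - (c - quantile_one M X0) \<le> t * (m - (c - quantile_one M X0))"
  shows "(\<lambda>w. t * Y w + (1 - t) * c) \<in> admissible_icx M \<rho> x (\<lambda>w. X0 w + z)"
proof -
  interpret prob_space M by (rule P)
  let ?q = "quantile_one M X0"
  have YL: "Y \<in> L2 M" and bud: "expect M (\<lambda>w. \<rho> w * Y w) \<le> x" using Y unfolding admissible_def by auto
  have L: "(\<lambda>w. t * Y w + (1 - t) * c) \<in> L2 M" by (rule L2_affine[OF P YL])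
  have iy: "integrable M (\<lambda>w. \<rho> w * Y w)" using L2_prod[OF P rL2 YL] .
  have "expect M (\<lambda>w. \<rho> w * (t * Y w + (1 - t) * c)) = expect M (\<lambda>w. t * (\<rho> w * Y w) + ((1 - t) * c) * \<rho> w)"
    unfolding expect_def by (simp add: algebra_simps)
  also have "\<dots> = t * expect M (\<lambda>w. \<rho> w * Y w) + ((1 - t) * c) * expect M \<rho>"
    unfolding expect_def using iy rint by simp
  also have "((1 - t) * c) * expect M \<rho> = (1 - t) * x" unfolding c_def using Epos by simp
  also have "t * expect M (\<lambda>w. \<rho> w * Y w) + (1 - t) * x \<le> t * x + (1 - t) * x"
    using bud t by simp
  finally have b: "expect M (\<lambda>w. \<rho> w * (t * Y w + (1 - t) * c)) \<le> x" by (simp add: algebra_simps)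
  have ic: "icx_ge M (\<lambda>w. t * Y w + (1 - t) * c - z) X0"
    unfolding icx_ge_def
  proof (intro allI impI)
    fix f :: "real \<Rightarrow> real" assume "mono f \<and> convex_on UNIV f"
    then have f: "mc f" by (simp add: mc_def)
    define kk where "kk = t * m + (1 - t) * c - z"
    have g: "mc (\<lambda>u. f (t * u + kk))" using mc_affine[OF f t(1)] .
    have "ext_expect M (\<lambda>w. f (X0 w)) \<le> ext_expect M (\<lambda>w. f (t * X0 w + kk))"
    proof (rule ext_expect_mono_AE)
      show "AE w in M. f (X0 w) \<le> f (t * X0 w + kk)"
        using AE_X0_q
      proof (rule eventually_mono)
        fix w assume w: "X0 w \<le> ?q"
        have "(1 - t) * X0 w \<le> (1 - t) * ?q" using w t by (intro mult_left_mono) auto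
        then have "X0 w \<le> t * X0 w + kk" using zt unfolding kk_def by (simp add: algebra_simps)
        then show "f (X0 w) \<le> f (t * X0 w + kk)" using f unfolding mc_def by (auto intro: monoD)
      qed
    qed
    also have "\<dots> \<le> ext_expect M (\<lambda>w. f (t * (Y w - m) + kk))"
      using icx g unfolding icx_ge_def mc_def by blast
    also have "(\<lambda>w. f (t * (Y w - m) + kk)) = (\<lambda>w. f (t * Y w + (1 - t) * c - z))"
      unfolding kk_def by (simp add: algebra_simps)
    finally show "ext_expect M (\<lambda>w. f (X0 w)) \<le> ext_expect M (\<lambda>w. f (t * Y w + (1 - t) * c - z))" .
  qed
  show ?thesis unfolding admissible_icx_def using L b ic icx_shift by blast
qed

end



theorem proposition8p1:
  fixes M :: "'a measure" and \<rho> X0 Xs :: "'a \<Rightarrow> real" and x :: real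
  assumes "prob_space M"
    and "complete_measure M"
    and "nonatomic M"
    and "\<rho> \<in> L2 M"
    and "AE \<omega> in M. \<rho> \<omega> > 0"
    and "var M \<rho> > 0"
    and "X0 \<in> Linf M"
  shows "bpv_efficient M \<rho> X0 x Xs \<longleftrightarrow>
    (\<exists>z. z \<ge> x / expect M \<rho> - quantile_one M X0 \<and>
         variance_minimal M (admissible_icx M \<rho> x (\<lambda>\<omega>. X0 \<omega> + z)) Xs)"
proof -
  note P = assms(1) and rL2 = assms(4) and rpos = assms(5) and X0L = assms(7)
  interpret prob_space M by (rule P)
  define c where "c = x / expect M \<rho>"
  define z0 where "z0 = c - quantile_one M X0"
  let ?psi = "beating_perf M X0"
  have Ep: "expect M \<rho> > 0" using Epos[OF P rL2 rpos X0L] .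
  have psi_ge: "ereal m \<le> ?psi Y" if "icx_ge M (\<lambda>w. Y w - m) X0" for Y m
    unfolding beating_perf_def using that by (intro Sup_upper) auto
  have adm_icx: "Y \<in> admissible_icx M \<rho> x (\<lambda>w. X0 w + z) \<longleftrightarrow> Y \<in> admissible M \<rho> x \<and> icx_ge M (\<lambda>w. Y w - z) X0" for Y z
    unfolding admissible_icx_def admissible_def using icx_shift by blast
  define C where "C = (\<lambda>w::'a. c)"
  have C_adm: "C \<in> admissible M \<rho> x"
  proof -
    have "expect M (\<lambda>w. \<rho> w * C w) = c * expect M \<rho>" unfolding C_def expect_def by simp
    also have "\<dots> = x" unfolding c_def using Ep by simp
    finally show ?thesis unfolding admissible_def C_def using L2_const[OF P] by simp
  qed
  have C_var: "var M C = 0" unfolding var_def expect_def C_def by (simp add: prob_space)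
  have C_icx: "icx_ge M (\<lambda>w. C w - z0) X0"
    unfolding icx_ge_def
  proof (intro allI impI)
    fix f :: "real \<Rightarrow> real" assume f: "mono f \<and> convex_on UNIV f"
    show "ext_expect M (\<lambda>w. f (X0 w)) \<le> ext_expect M (\<lambda>w. f (C w - z0))"
    proof (rule ext_expect_mono_AE)
      show "AE w in M. f (X0 w) \<le> f (C w - z0)"
        using AE_X0_q[OF P rL2 rpos X0L]
        by (rule eventually_mono) (use f in \<open>auto simp: C_def z0_def intro: monoD\<close>)
    qed
  qed
  have C_psi: "ereal z0 \<le> ?psi C" using psi_ge[OF C_icx] .
  show ?thesis
  proof
    assume eff: "bpv_efficient M \<rho> X0 x Xs"
    have XA: "Xs \<in> admissible M \<rho> x" using eff unfolding bpv_efficient_def by simp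
    have XL: "Xs \<in> L2 M" using XA unfolding admissible_def by simp
    have ge: "ereal z0 \<le> ?psi Xs"
    proof (rule ccontr)
      assume "\<not> ereal z0 \<le> ?psi Xs"
      then have "?psi Xs < ?psi C" using C_psi by simp
      moreover have "var M C \<le> var M Xs" using C_var var_nonneg[OF P] by simp
      ultimately show False using eff C_adm unfolding bpv_efficient_def by force
    qed
    have lt: "?psi Xs < \<infinity>" using psi_finite[OF P XL X0L] .
    define z where "z = real_of_ereal (?psi Xs)"
    have pz: "?psi Xs = ereal z" unfolding z_def using ge lt by (cases "?psi Xs") auto
    have zz: "z \<ge> z0" using ge pz by simp
    have Xicx: "icx_ge M (\<lambda>w. Xs w - z) X0" using attain[OF P X0L] pz by simp
    have "variance_minimal M (admissible_icx M \<rho> x (\<lambda>\<omega>. X0 \<omega> + z)) Xs"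
      unfolding variance_minimal_def
    proof
      show "Xs \<in> admissible_icx M \<rho> x (\<lambda>\<omega>. X0 \<omega> + z)" using adm_icx XA Xicx by blast
      show "\<forall>Y\<in>admissible_icx M \<rho> x (\<lambda>\<omega>. X0 \<omega> + z). var M Xs \<le> var M Y"
      proof
        fix Y assume "Y \<in> admissible_icx M \<rho> x (\<lambda>\<omega>. X0 \<omega> + z)"
        then have YA: "Y \<in> admissible M \<rho> x" and Yi: "icx_ge M (\<lambda>w. Y w - z) X0" using adm_icx by auto
        have "?psi Y \<ge> ?psi Xs" using psi_ge[OF Yi] pz by simp
        show "var M Xs \<le> var M Y"
        proof (rule ccontr)
          assume "\<not> var M Xs \<le> var M Y"
          then show False using eff YA \<open>?psi Y \<ge> ?psi Xs\<close> unfolding bpv_efficient_def by force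
        qed
      qed
    qed
    then show "\<exists>z. z \<ge> x / expect M \<rho> - quantile_one M X0 \<and>
         variance_minimal M (admissible_icx M \<rho> x (\<lambda>\<omega>. X0 \<omega> + z)) Xs"
      using zz unfolding z0_def c_def by blast
  next
    assume "\<exists>z. z \<ge> x / expect M \<rho> - quantile_one M X0 \<and>
         variance_minimal M (admissible_icx M \<rho> x (\<lambda>\<omega>. X0 \<omega> + z)) Xs"
    then obtain z where zz: "z \<ge> z0" and vm: "variance_minimal M (admissible_icx M \<rho> x (\<lambda>\<omega>. X0 \<omega> + z)) Xs"
      unfolding z0_def c_def by blast
    have XI: "Xs \<in> admissible_icx M \<rho> x (\<lambda>\<omega>. X0 \<omega> + z)" and
      vmin: "\<And>Y. Y \<in> admissible_icx M \<rho> x (\<lambda>\<omega>. X0 \<omega> + z) \<Longrightarrow> var M Xs \<le> var M Y"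
      using vm unfolding variance_minimal_def by auto
    have XA: "Xs \<in> admissible M \<rho> x" and Xi: "icx_ge M (\<lambda>w. Xs w - z) X0" using XI adm_icx by auto
    have pX: "ereal z \<le> ?psi Xs" using psi_ge[OF Xi] .
    show "bpv_efficient M \<rho> X0 x Xs"
      unfolding bpv_efficient_def
    proof (intro conjI XA notI)
      assume "\<exists>Y\<in>admissible M \<rho> x. ?psi Y \<ge> ?psi Xs \<and> var M Y \<le> var M Xs \<and>
          (?psi Y > ?psi Xs \<or> var M Y < var M Xs)"
      then obtain Y where YA: "Y \<in> admissible M \<rho> x" and p1: "?psi Y \<ge> ?psi Xs"
        and v1: "var M Y \<le> var M Xs" and or: "?psi Y > ?psi Xs \<or> var M Y < var M Xs" by blast
      have YL: "Y \<in> L2 M" using YA unfolding admissible_def by simp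
      show False
      proof (cases "var M Y < var M Xs")
        case True
        have "ereal z \<le> ?psi Y" using pX p1 by simp
        then have "icx_ge M (\<lambda>w. Y w - z) X0" using attain[OF P X0L] by simp
        then have "Y \<in> admissible_icx M \<rho> x (\<lambda>\<omega>. X0 \<omega> + z)" using adm_icx YA by blast
        then show False using vmin True by force
      next
        case False
        then have "?psi Y > ?psi Xs" using or by simp
        then have "ereal z < ?psi Y" using pX by simp
        then obtain m where mi: "icx_ge M (\<lambda>w. Y w - m) X0" and zm: "z < m"
          unfolding beating_perf_def less_Sup_iff by auto
        show False
        proof (cases "var M Y = 0")
          case True
          have "m \<le> z0" using key[OF P rL2 rpos X0L YA True mi] unfolding z0_def c_def .
          then show False using zm zz by simp
        next
          case False
          then have vp: "var M Y > 0" using var_nonneg[OF P, of Y] by simp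
          define t0 where "t0 = (z - z0) / (m - z0)"
          have mz0: "m - z0 > 0" using zm zz by simp
          have t00: "0 \<le> t0" "t0 < 1" using zz zm mz0 by (auto simp: t0_def divide_simps)
          define t where "t = (1 + t0) / 2"
          have t: "0 < t" "t < 1" "t0 \<le> t" using t00 by (auto simp: t_def)
          have "z - z0 = t0 * (m - z0)" using mz0 by (simp add: t0_def)
          also have "\<dots> \<le> t * (m - z0)" using t mz0 by (intro mult_right_mono) auto
          finally have zt: "z - z0 \<le> t * (m - z0)" .
          have "(\<lambda>w. t * Y w + (1 - t) * c) \<in> admissible_icx M \<rho> x (\<lambda>w. X0 w + z)"
            using mix[OF P rL2 rpos X0L YA mi t(1,2)] zt unfolding z0_def c_def by simp
          then have "var M Xs \<le> var M (\<lambda>w. t * Y w + (1 - t) * c)" by (rule vmin)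
          also have "\<dots> = t\<^sup>2 * var M Y" by (rule var_affine[OF P YL])
          also have "\<dots> < var M Y"
          proof -
            have "t\<^sup>2 < 1" using t by (simp add: power2_eq_square) (metis mult_strict_mono' mult_1 less_eq_real_def)
            then show ?thesis using vp by simp
          qed
          finally show False using v1 by simp
        qed
      qed
    qed
  qed
qed


end
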